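(* Fix $\rho>0$ and $\nu\in(0,1)$. (I) For $\lambda_1\ge0$, $\lambda_3>0$ and $x\in[0,1]$ define $F_U(\lambda_1,\lambda_3;x):=1+\lambda_3\big(1-\exp\big(\tfrac{\lambda_1}{\lambda_3}(x-\nu)+\rho\big)\big)$. Fix $0<t_{\min}\le t_{\max}$ and suppose $t:=\lambda_1/\lambda_3\in[t_{\min},t_{\max}]$. If $0\le\lambda_3<\frac{1}{e^{\rho+t(1-\nu)}-1}$, then $F_U(\lambda_1,\lambda_3;x)>0$ for all $x\in[0,1]$. Moreover, for each fixed $x$, $(\lambda_1,\lambda_3)\mapsto F_U(\lambda_1,\lambda_3;x)$ is concave on $\{\lambda_3>0\}$; hence $g_U:=\log F_U$ is exp-concave on any compact subset of $\{\lambda_3>0\}$ on which $F_U>0$. (II) For $\beta>0$, $\gamma\ge0$, set $A(\beta,\nu):=e^{-\rho+\beta\nu}$ and $F_L(\gamma;\beta,\nu,x):=1+\gamma(e^{\beta x}-A(\beta,\nu))$, $x\in[0,1]$. Then $\gamma\mapsto F_L(\gamma;\beta,\nu,x)$ is affine, and $\min_{x\in[0,1]}F_L(\gamma;\beta,\nu,x)=1+\gamma(1-A(\beta,\nu))$. Consequently: if $A(\beta,\nu)\le1$ then $F_L(\gamma;\beta,\nu,x)\ge1$ for all $\gamma\ge0$, $x\in[0,1]$; if $A(\beta,\nu)>1$ then $F_L(\gamma;\beta,\nu,x)>0$ for all $x\in[0,1]$ whenever $0\le\gamma<\frac{1}{A(\beta,\nu)-1}$. On any compact interval of $\gamma$ on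 which $F_L>0$, $g_L:=\log F_L$ is exp-concave.
   Context: A function $g$ on a convex set is exp-concave if $e^{g}$ is concave there. *)

theory Defs
  imports "HOL-Analysis.Analysis"
begin

definition exp_concave_on :: "'a::real_vector set \<Rightarrow> ('a \<Rightarrow> real) \<Rightarrow> bool" where
  "exp_concave_on S g \<longleftrightarrow> convex S \<and> concave_on S (\<lambda>p. exp (g p))"

definition F_U :: "real \<Rightarrow> real \<Rightarrow> real \<Rightarrow> real \<Rightarrow> real \<Rightarrow> real" where
  "F_U \<rho> \<nu> l1 l3 x = 1 + l3 * (1 - exp ((l1 / l3) * (x - \<nu>) + \<rho>))"

definition A_LB :: "real \<Rightarrow> real \<Rightarrow> real \<Rightarrow> real" where
  "A_LB \<rho> \<beta> \<nu> = exp (- \<rho> + \<beta> * \<nu>)"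

definition F_L :: "real \<Rightarrow> real \<Rightarrow> real \<Rightarrow> real \<Rightarrow> real \<Rightarrow> real" where
  "F_L \<rho> \<gamma> \<beta> \<nu> x = 1 + \<gamma> * (exp (\<beta> * x) - A_LB \<rho> \<beta> \<nu>)"

end

theory Submission
  imports Defs
begin

lemma persp:
  fixes c r :: real
  shows "convex_on {p :: real \<times> real. snd p > 0} (\<lambda>p. snd p * exp (c * (fst p / snd p) + r))"
proof (rule convex_onI)
  show "convex {p :: real \<times> real. snd p > 0}"
    unfolding convex_def
  proof (clarsimp)
    fix b ba u v :: real assume "0 < b" "0 < ba" "0 \<le> u" "0 \<le> v" "u + v = 1"
    thus "0 < u * b + v * ba"
      by (cases "u = 0") (auto intro: add_pos_nonneg)
  qed
next
  fix t :: real and x y :: "real \<times> real"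
  assume t: "0 < t" "t < 1" and x: "x \<in> {p. snd p > 0}" and y: "y \<in> {p. snd p > 0}"
  obtain a1 s1 where xe: "x = (a1, s1)" by (cases x)
  obtain a2 s2 where ye: "y = (a2, s2)" by (cases y)
  have s1: "s1 > 0" and s2: "s2 > 0" using x y xe ye by auto
  define S where "S = (1 - t) * s1 + t * s2"
  have S: "S > 0" using t s1 s2 unfolding S_def by (simp add: add_pos_pos)
  define w where "w = t * s2 / S"
  have w0: "0 \<le> w" and w1: "w \<le> 1" using t s1 s2 S unfolding w_def S_def by (auto simp: field_simps)
  have omw: "1 - w = (1 - t) * s1 / S" using S unfolding w_def S_def by (simp add: field_simps)
  define z1 where "z1 = c * (a1 / s1) + r"
  define z2 where "z2 = c * (a2 / s2) + r"
  have eq: "c * (((1 - t) * a1 + t * a2) / S) + r = (1 - w) * z1 + w * z2"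
  proof -
    have "(1 - w) * z1 + w * z2 = (c * ((1 - t) * a1 + t * a2) + r * ((1 - t) * s1 + t * s2)) / S"
    proof -
      have e1: "(1 - t) * s1 / S * z1 = (1 - t) * (c * a1 + r * s1) / S"
        unfolding z1_def using s1 S by (simp add: field_simps)
      have e2: "t * s2 / S * z2 = t * (c * a2 + r * s2) / S"
        unfolding z2_def using s2 S by (simp add: field_simps)
      show ?thesis unfolding omw unfolding w_def e1 e2 by (simp add: add_divide_distrib[symmetric] algebra_simps)
    qed
    also have "\<dots> = c * (((1 - t) * a1 + t * a2) / S) + r"
      using S unfolding S_def[symmetric] by (simp add: field_simps)
    finally show ?thesis by simp
  qed
  have "exp ((1 - w) * z1 + w * z2) \<le> (1 - w) * exp z1 + w * exp z2"
    using convex_onD[OF exp_convex, of w z1 z2] w0 w1 by simp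
  hence "S * exp ((1 - w) * z1 + w * z2) \<le> S * ((1 - w) * exp z1 + w * exp z2)"
    using S by simp
  also have "\<dots> = (1 - t) * (s1 * exp z1) + t * (s2 * exp z2)"
  proof -
    have a: "S * (1 - w) = (1 - t) * s1" unfolding omw using S by simp
    have b: "S * w = t * s2" unfolding w_def using S by simp
    show ?thesis using a b by (simp add: distrib_left mult.assoc[symmetric])
  qed
  finally show "(\<lambda>p. snd p * exp (c * (fst p / snd p) + r)) ((1 - t) *\<^sub>R x + t *\<^sub>R y)
       \<le> (1 - t) * (\<lambda>p. snd p * exp (c * (fst p / snd p) + r)) x + t * (\<lambda>p. snd p * exp (c * (fst p / snd p) + r)) y"
    using eq unfolding xe ye z1_def z2_def S_def by simp
qed

theorem mainTheorem14:
  fixes \<rho> \<nu> :: real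
  assumes rho: "\<rho> > 0" and nu: "0 < \<nu>" "\<nu> < 1"
  shows
    \<comment> \<open>(I) positivity\<close>
    "(\<forall>tmin tmax l1 l3. 0 < tmin \<and> tmin \<le> tmax \<and> 0 \<le> l1 \<and> 0 < l3
        \<and> l1 / l3 \<in> {tmin..tmax}
        \<and> l3 < 1 / (exp (\<rho> + (l1 / l3) * (1 - \<nu>)) - 1)
        \<longrightarrow> (\<forall>x\<in>{0..1}. F_U \<rho> \<nu> l1 l3 x > 0))
     \<and> \<comment> \<open>(I) concavity in (lambda1, lambda3) on lambda3 > 0\<close>
     (\<forall>x\<in>{0..1}. concave_on {p :: real \<times> real. snd p > 0}
        (\<lambda>p. F_U \<rho> \<nu> (fst p) (snd p) x))
     \<and> \<comment> \<open>(I) exp-concavity of log F_U\<close>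
     (\<forall>x\<in>{0..1}. \<forall>K :: (real \<times> real) set.
        compact K \<and> convex K \<and> K \<subseteq> {p. snd p > 0}
        \<and> (\<forall>p\<in>K. F_U \<rho> \<nu> (fst p) (snd p) x > 0)
        \<longrightarrow> exp_concave_on K (\<lambda>p. ln (F_U \<rho> \<nu> (fst p) (snd p) x)))
     \<and> \<comment> \<open>(II)\<close>
     (\<forall>\<beta> > 0.
        \<comment> \<open>affine in gamma\<close>
        (\<forall>x\<in>{0..1}. \<exists>a b. \<forall>\<gamma>. F_L \<rho> \<gamma> \<beta> \<nu> x = a + b * \<gamma>)
        \<and> \<comment> \<open>minimum over x in [0,1]\<close>
        (\<forall>\<gamma> \<ge> 0. (\<exists>x\<in>{0..1}. F_L \<rho> \<gamma> \<beta> \<nu> x = 1 + \<gamma> * (1 - A_LB \<rho> \<beta> \<nu>))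
                  \<and> (\<forall>x\<in>{0..1}. 1 + \<gamma> * (1 - A_LB \<rho> \<beta> \<nu>) \<le> F_L \<rho> \<gamma> \<beta> \<nu> x))
        \<and> (A_LB \<rho> \<beta> \<nu> \<le> 1 \<longrightarrow> (\<forall>\<gamma> \<ge> 0. \<forall>x\<in>{0..1}. F_L \<rho> \<gamma> \<beta> \<nu> x \<ge> 1))
        \<and> (A_LB \<rho> \<beta> \<nu> > 1 \<longrightarrow> (\<forall>\<gamma>. 0 \<le> \<gamma> \<and> \<gamma> < 1 / (A_LB \<rho> \<beta> \<nu> - 1)
                \<longrightarrow> (\<forall>x\<in>{0..1}. F_L \<rho> \<gamma> \<beta> \<nu> x > 0)))
        \<and> (\<forall>x\<in>{0..1}. \<forall>a b. 0 \<le> a \<and> a \<le> b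
              \<and> (\<forall>\<gamma>\<in>{a..b}. F_L \<rho> \<gamma> \<beta> \<nu> x > 0)
              \<longrightarrow> exp_concave_on {a..b} (\<lambda>\<gamma>. ln (F_L \<rho> \<gamma> \<beta> \<nu> x))))"
  proof -
  have P1: "\<forall>tmin tmax l1 l3. 0 < tmin \<and> tmin \<le> tmax \<and> 0 \<le> l1 \<and> 0 < l3
        \<and> l1 / l3 \<in> {tmin..tmax}
        \<and> l3 < 1 / (exp (\<rho> + (l1 / l3) * (1 - \<nu>)) - 1)
        \<longrightarrow> (\<forall>x\<in>{0..1}. F_U \<rho> \<nu> l1 l3 x > 0)"
  proof (intro allI impI ballI)
    fix tmin tmax l1 l3 x :: real
    assume h: "0 < tmin \<and> tmin \<le> tmax \<and> 0 \<le> l1 \<and> 0 < l3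
        \<and> l1 / l3 \<in> {tmin..tmax}
        \<and> l3 < 1 / (exp (\<rho> + (l1 / l3) * (1 - \<nu>)) - 1)" and x: "x \<in> {0..1}"
    define t where "t = l1 / l3"
    define E where "E = exp (\<rho> + t * (1 - \<nu>))"
    have t0: "t \<ge> 0" using h unfolding t_def by auto
    have l3: "l3 > 0" using h by auto
    have "\<rho> + t * (1 - \<nu>) > 0" using rho nu t0 by (simp add: add_pos_nonneg)
    hence E1: "E > 1" unfolding E_def by simp
    have "l3 < 1 / (E - 1)" using h unfolding E_def t_def by simp
    hence lE: "l3 * (E - 1) < 1" using E1 by (simp add: field_simps)
    have "t * (x - \<nu>) \<le> t * (1 - \<nu>)" using t0 x by (intro mult_left_mono) auto
    hence "exp (t * (x - \<nu>) + \<rho>) \<le> E" unfolding E_def by simp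
    hence "l3 * exp (t * (x - \<nu>) + \<rho>) \<le> l3 * E" using l3 by simp
    thus "F_U \<rho> \<nu> l1 l3 x > 0" unfolding F_U_def t_def[symmetric] using lE
      by (simp add: algebra_simps)
  qed
  have conc: "concave_on {p :: real \<times> real. snd p > 0} (\<lambda>p. F_U \<rho> \<nu> (fst p) (snd p) x)" for x
  proof -
    have cv: "convex_on {p :: real \<times> real. snd p > 0} (\<lambda>p. snd p * exp ((x - \<nu>) * (fst p / snd p) + \<rho>))"
      by (rule persp)
    show ?thesis unfolding concave_on_iff
    proof (intro conjI ballI allI impI)
      show "convex {p :: real \<times> real. snd p > 0}" using cv by (simp add: convex_on_def)
    next
      fix p q :: "real \<times> real" and u v :: real
      assume p: "p \<in> {p. snd p > 0}" and q: "q \<in> {p. snd p > 0}" and u: "0 \<le> u" and v: "0 \<le> v" and uv: "u + v = 1"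
      have i: "snd (u *\<^sub>R p + v *\<^sub>R q) * exp ((x - \<nu>) * (fst (u *\<^sub>R p + v *\<^sub>R q) / snd (u *\<^sub>R p + v *\<^sub>R q)) + \<rho>)
        \<le> u * (snd p * exp ((x - \<nu>) * (fst p / snd p) + \<rho>)) + v * (snd q * exp ((x - \<nu>) * (fst q / snd q) + \<rho>))"
        using cv p q u v uv unfolding convex_on_def by blast
      have e: "\<And>l1 l3. F_U \<rho> \<nu> l1 l3 x = 1 + l3 - l3 * exp ((x - \<nu>) * (l1 / l3) + \<rho>)"
        unfolding F_U_def by (simp add: algebra_simps)
      have s: "snd (u *\<^sub>R p + v *\<^sub>R q) = u * snd p + v * snd q" by simp
      show "u * F_U \<rho> \<nu> (fst p) (snd p) x + v * F_U \<rho> \<nu> (fst q) (snd q) x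
          \<le> F_U \<rho> \<nu> (fst (u *\<^sub>R p + v *\<^sub>R q)) (snd (u *\<^sub>R p + v *\<^sub>R q)) x"
        unfolding e using i s uv by (simp add: algebra_simps)
    qed
  qed
  have P3: "\<forall>x\<in>{0..1}. \<forall>K :: (real \<times> real) set.
        compact K \<and> convex K \<and> K \<subseteq> {p. snd p > 0}
        \<and> (\<forall>p\<in>K. F_U \<rho> \<nu> (fst p) (snd p) x > 0)
        \<longrightarrow> exp_concave_on K (\<lambda>p. ln (F_U \<rho> \<nu> (fst p) (snd p) x))"
  proof (intro ballI allI impI)
    fix x :: real and K :: "(real \<times> real) set"
    assume h: "compact K \<and> convex K \<and> K \<subseteq> {p. snd p > 0}
        \<and> (\<forall>p\<in>K. F_U \<rho> \<nu> (fst p) (snd p) x > 0)"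
    have cK: "concave_on K (\<lambda>p. F_U \<rho> \<nu> (fst p) (snd p) x)"
      using conc[of x] h unfolding concave_on_def by (blast intro: convex_on_subset)
    show "exp_concave_on K (\<lambda>p. ln (F_U \<rho> \<nu> (fst p) (snd p) x))"
      unfolding exp_concave_on_def concave_on_iff
    proof (intro conjI ballI allI impI)
      show "convex K" using h by simp
    next
      show "convex K" using h by simp
    next
      fix p q :: "real \<times> real" and u v :: real
      assume p: "p \<in> K" and q: "q \<in> K" and u: "0 \<le> u" and v: "0 \<le> v" and uv: "u + v = 1"
      have m: "u *\<^sub>R p + v *\<^sub>R q \<in> K" using p q u v uv h unfolding convex_def by blast
      have ineq: "u * F_U \<rho> \<nu> (fst p) (snd p) x + v * F_U \<rho> \<nu> (fst q) (snd q) x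
          \<le> F_U \<rho> \<nu> (fst (u *\<^sub>R p + v *\<^sub>R q)) (snd (u *\<^sub>R p + v *\<^sub>R q)) x"
        using cK p q u v uv unfolding concave_on_iff by blast
      show "u * exp (ln (F_U \<rho> \<nu> (fst p) (snd p) x)) + v * exp (ln (F_U \<rho> \<nu> (fst q) (snd q) x))
          \<le> exp (ln (F_U \<rho> \<nu> (fst (u *\<^sub>R p + v *\<^sub>R q)) (snd (u *\<^sub>R p + v *\<^sub>R q)) x))"
      proof -
        have "F_U \<rho> \<nu> (fst (u *\<^sub>R p + v *\<^sub>R q)) (snd (u *\<^sub>R p + v *\<^sub>R q)) x > 0"
          using h m by blast
        moreover have "F_U \<rho> \<nu> (fst p) (snd p) x > 0" "F_U \<rho> \<nu> (fst q) (snd q) x > 0"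
          using h p q by blast+
        ultimately show ?thesis using ineq by simp
      qed
    qed
  qed
  have P4: "\<forall>\<beta> > 0.
        (\<forall>x\<in>{0..1}. \<exists>a b. \<forall>\<gamma>. F_L \<rho> \<gamma> \<beta> \<nu> x = a + b * \<gamma>)
        \<and> (\<forall>\<gamma> \<ge> 0. (\<exists>x\<in>{0..1}. F_L \<rho> \<gamma> \<beta> \<nu> x = 1 + \<gamma> * (1 - A_LB \<rho> \<beta> \<nu>))
                  \<and> (\<forall>x\<in>{0..1}. 1 + \<gamma> * (1 - A_LB \<rho> \<beta> \<nu>) \<le> F_L \<rho> \<gamma> \<beta> \<nu> x))
        \<and> (A_LB \<rho> \<beta> \<nu> \<le> 1 \<longrightarrow> (\<forall>\<gamma> \<ge> 0. \<forall>x\<in>{0..1}. F_L \<rho> \<gamma> \<beta> \<nu> x \<ge> 1))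
        \<and> (A_LB \<rho> \<beta> \<nu> > 1 \<longrightarrow> (\<forall>\<gamma>. 0 \<le> \<gamma> \<and> \<gamma> < 1 / (A_LB \<rho> \<beta> \<nu> - 1)
                \<longrightarrow> (\<forall>x\<in>{0..1}. F_L \<rho> \<gamma> \<beta> \<nu> x > 0)))
        \<and> (\<forall>x\<in>{0..1}. \<forall>a b. 0 \<le> a \<and> a \<le> b
              \<and> (\<forall>\<gamma>\<in>{a..b}. F_L \<rho> \<gamma> \<beta> \<nu> x > 0)
              \<longrightarrow> exp_concave_on {a..b} (\<lambda>\<gamma>. ln (F_L \<rho> \<gamma> \<beta> \<nu> x)))"
  proof (intro allI impI)
    fix \<beta> :: real assume b: "\<beta> > 0"
    define A where "A = A_LB \<rho> \<beta> \<nu>"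
    have aff: "F_L \<rho> \<gamma> \<beta> \<nu> x = 1 + (exp (\<beta> * x) - A) * \<gamma>" for \<gamma> x
      unfolding F_L_def A_def by (simp add: algebra_simps)
    have lb: "1 + \<gamma> * (1 - A) \<le> F_L \<rho> \<gamma> \<beta> \<nu> x" if "\<gamma> \<ge> 0" "x \<in> {0..1}" for \<gamma> x
    proof -
      have "1 \<le> exp (\<beta> * x)" using b that by simp
      hence "\<gamma> * (1 - A) \<le> \<gamma> * (exp (\<beta> * x) - A)" using that by (intro mult_left_mono) auto
      thus ?thesis unfolding aff by (simp add: algebra_simps)
    qed
    show "(\<forall>x\<in>{0..1}. \<exists>a b. \<forall>\<gamma>. F_L \<rho> \<gamma> \<beta> \<nu> x = a + b * \<gamma>)
        \<and> (\<forall>\<gamma> \<ge> 0. (\<exists>x\<in>{0..1}. F_L \<rho> \<gamma> \<beta> \<nu> x = 1 + \<gamma> * (1 - A_LB \<rho> \<beta> \<nu>))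
                  \<and> (\<forall>x\<in>{0..1}. 1 + \<gamma> * (1 - A_LB \<rho> \<beta> \<nu>) \<le> F_L \<rho> \<gamma> \<beta> \<nu> x))
        \<and> (A_LB \<rho> \<beta> \<nu> \<le> 1 \<longrightarrow> (\<forall>\<gamma> \<ge> 0. \<forall>x\<in>{0..1}. F_L \<rho> \<gamma> \<beta> \<nu> x \<ge> 1))
        \<and> (A_LB \<rho> \<beta> \<nu> > 1 \<longrightarrow> (\<forall>\<gamma>. 0 \<le> \<gamma> \<and> \<gamma> < 1 / (A_LB \<rho> \<beta> \<nu> - 1)
                \<longrightarrow> (\<forall>x\<in>{0..1}. F_L \<rho> \<gamma> \<beta> \<nu> x > 0)))
        \<and> (\<forall>x\<in>{0..1}. \<forall>a b. 0 \<le> a \<and> a \<le> b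
              \<and> (\<forall>\<gamma>\<in>{a..b}. F_L \<rho> \<gamma> \<beta> \<nu> x > 0)
              \<longrightarrow> exp_concave_on {a..b} (\<lambda>\<gamma>. ln (F_L \<rho> \<gamma> \<beta> \<nu> x)))"
      unfolding A_def[symmetric]
    proof (intro conjI ballI allI impI)
      fix x :: real show "\<exists>a b. \<forall>\<gamma>. F_L \<rho> \<gamma> \<beta> \<nu> x = a + b * \<gamma>" using aff by blast
    next
      fix \<gamma> :: real assume "\<gamma> \<ge> 0"
      show "\<exists>x\<in>{0..1}. F_L \<rho> \<gamma> \<beta> \<nu> x = 1 + \<gamma> * (1 - A)"
        by (rule bexI[of _ 0]) (auto simp: aff algebra_simps)
    next
      fix \<gamma> x :: real assume "\<gamma> \<ge> 0" "x \<in> {0..1}"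
      thus "1 + \<gamma> * (1 - A) \<le> F_L \<rho> \<gamma> \<beta> \<nu> x" by (rule lb)
    next
      fix \<gamma> x :: real assume A: "A \<le> 1" and g: "\<gamma> \<ge> 0" and x: "x \<in> {0..1}"
      have "0 \<le> \<gamma> * (1 - A)" using A g by simp
      thus "1 \<le> F_L \<rho> \<gamma> \<beta> \<nu> x" using lb[OF g x] by linarith
    next
      fix \<gamma> x :: real assume A: "A > 1" and g: "0 \<le> \<gamma> \<and> \<gamma> < 1 / (A - 1)" and x: "x \<in> {0..1}"
      have "\<gamma> * (A - 1) < 1" using A g by (simp add: field_simps)
      thus "0 < F_L \<rho> \<gamma> \<beta> \<nu> x" using lb[OF _ x, of \<gamma>] g by (simp add: algebra_simps)
    next
      fix x a b :: real
      assume h: "0 \<le> a \<and> a \<le> b \<and> (\<forall>\<gamma>\<in>{a..b}. F_L \<rho> \<gamma> \<beta> \<nu> x > 0)"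
      show "exp_concave_on {a..b} (\<lambda>\<gamma>. ln (F_L \<rho> \<gamma> \<beta> \<nu> x))"
        unfolding exp_concave_on_def concave_on_iff
      proof (intro conjI ballI allI impI)
        show "convex {a..b}" by simp
      next
        show "convex {a..b}" by simp
      next
        fix p q u v :: real assume p: "p \<in> {a..b}" and q: "q \<in> {a..b}" and u: "0 \<le> u" and v: "0 \<le> v" and uv: "u + v = 1"
        have m: "u *\<^sub>R p + v *\<^sub>R q \<in> {a..b}" using p q u v uv convex_real_interval(5)[of a b]
          unfolding convex_def by blast
        have "u * F_L \<rho> p \<beta> \<nu> x + v * F_L \<rho> q \<beta> \<nu> x = F_L \<rho> (u *\<^sub>R p + v *\<^sub>R q) \<beta> \<nu> x"
          unfolding aff using uv by (simp add: algebra_simps)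
        thus "u * exp (ln (F_L \<rho> p \<beta> \<nu> x)) + v * exp (ln (F_L \<rho> q \<beta> \<nu> x))
            \<le> exp (ln (F_L \<rho> (u *\<^sub>R p + v *\<^sub>R q) \<beta> \<nu> x))"
          using h p q m by simp
      qed
    qed
  qed
  show ?thesis using P1 conc P3 P4 by blast
qed

end
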